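(* Consider a list of $l$ items with initial order $[a_1,a_2,\dots,a_l]$ and, for $s\ge1$, the request sequence $$\sigma_\gamma=\bigl\langle (a_l^3,a_{l-1}^3,\dots,a_1^3)^{2s}\bigr\rangle.$$ Under the full cost model, $\mathrm{MTFO}(\sigma_\gamma)=\mathrm{MTFE}(\sigma_\gamma)=s\,(3l^2+o(l^2))$, $\mathrm{TS}(\sigma_\gamma)=s\,(4l^2+o(l^2))$ and $\mathrm{OPT}(\sigma_\gamma)=s\,(2l^2+o(l^2))$, where the $o(l^2)$ terms depend only on $l$ and are $o(l^2)$ as $l\to\infty$.
   Context: Static list update: serving a request to the item at position $i$ (from the front) costs $i$ (full cost model); the accessed item may be moved closer to the front for free (free exchange); two adjacent items may be swapped at cost $1$ (paid exchange). $\mathrm{OPT}(\sigma)$ is the minimum cost of any offline algorithm from the same initial list. Notation: $a^3$ denotes three consecutive requests to $a$, and $(w)^{k}$ denotes $k$ concatenated copies of $w$. MTFO moves a requested item to the front on the 1st, 3rd, 5th, ... request to that item; MTFE on the 2nd, 4th, 6th, ... request; otherwise they leave it in place. TS (Timestamp): on a request to item $x$, if $x$ has been requested before and some item preceding $x$ has been requested at most once since the previous request to $x$, then $x$ is moved to immediately in front of the frontmost such item; otherwise nothing moves. *)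

theory Defs
  imports Main "HOL-Library.Landau_Symbols"
begin

text \<open>Lists are distinct lists of items; positions are 0-based via pos, so the
  full-cost-model cost of accessing item x in list xs is pos xs x + 1.\<close>

definition pos :: "'a list \<Rightarrow> 'a \<Rightarrow> nat" where
  "pos xs x = length (takeWhile (\<lambda>y. y \<noteq> x) xs)"

definition move_to :: "nat \<Rightarrow> 'a \<Rightarrow> 'a list \<Rightarrow> 'a list" where
  "move_to j x xs = take j (remove1 x xs) @ x # drop j (remove1 x xs)"

definition mtf :: "'a \<Rightarrow> 'a list \<Rightarrow> 'a list" where
  "mtf x xs = move_to 0 x xs"

definition swap_adj :: "nat \<Rightarrow> 'a list \<Rightarrow> 'a list" where
  "swap_adj i xs = xs[i := xs ! Suc i, Suc i := xs ! i]"

fun alg_cost :: "('a list \<Rightarrow> 'a list \<Rightarrow> 'a \<Rightarrow> 'a list) \<Rightarrow> 'a list \<Rightarrow> 'a list \<Rightarrow> 'a list \<Rightarrow> nat" where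
  "alg_cost step hist xs [] = 0"
| "alg_cost step hist xs (x # \<sigma>) =
     pos xs x + 1 + alg_cost step (hist @ [x]) (step hist xs x) \<sigma>"

definition MTFO_step :: "'a list \<Rightarrow> 'a list \<Rightarrow> 'a \<Rightarrow> 'a list" where
  "MTFO_step hist xs x = (if even (count_list hist x) then mtf x xs else xs)"

definition MTFE_step :: "'a list \<Rightarrow> 'a list \<Rightarrow> 'a \<Rightarrow> 'a list" where
  "MTFE_step hist xs x = (if odd (count_list hist x) then mtf x xs else xs)"

definition TS_step :: "'a list \<Rightarrow> 'a list \<Rightarrow> 'a \<Rightarrow> 'a list" where
  "TS_step hist xs x =
     (if x \<in> set hist then
        (let since = takeWhile (\<lambda>z. z \<noteq> x) (rev hist);
             cands = filter (\<lambda>y. count_list since y \<le> 1) (take (pos xs x) xs)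
         in if cands = [] then xs else move_to (pos xs (hd cands)) x xs)
      else xs)"

definition MTFO :: "'a list \<Rightarrow> 'a list \<Rightarrow> nat" where
  "MTFO xs \<sigma> = alg_cost MTFO_step [] xs \<sigma>"
definition MTFE :: "'a list \<Rightarrow> 'a list \<Rightarrow> nat" where
  "MTFE xs \<sigma> = alg_cost MTFE_step [] xs \<sigma>"
definition TS :: "'a list \<Rightarrow> 'a list \<Rightarrow> nat" where
  "TS xs \<sigma> = alg_cost TS_step [] xs \<sigma>"

text \<open>Offline executions: paid exchanges of adjacent items (cost 1) at any time,
  serving a request at cost (position, 1-based), then a free exchange moving the
  accessed item to any position closer to the front.\<close>
inductive offline_run :: "'a list \<Rightarrow> 'a list \<Rightarrow> nat \<Rightarrow> bool" where
  finish: "offline_run xs [] 0"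
| paid: "Suc i < length xs \<Longrightarrow> offline_run (swap_adj i xs) \<sigma> c \<Longrightarrow> offline_run xs \<sigma> (Suc c)"
| serve: "x \<in> set xs \<Longrightarrow> j \<le> pos xs x \<Longrightarrow> offline_run (move_to j x xs) \<sigma> c
           \<Longrightarrow> offline_run xs (x # \<sigma>) (pos xs x + 1 + c)"

definition OPT :: "'a list \<Rightarrow> 'a list \<Rightarrow> nat" where
  "OPT xs \<sigma> = (LEAST c. offline_run xs \<sigma> c)"

text \<open>Items a_i are represented by the natural number i; initial list [a_1,...,a_l].\<close>
definition init_list :: "nat \<Rightarrow> nat list" where
  "init_list l = [1..<Suc l]"

definition sigma_gamma :: "nat \<Rightarrow> nat \<Rightarrow> nat list" where
  "sigma_gamma l s = concat (replicate (2 * s) (concat (map (\<lambda>i. replicate 3 i) (rev [1..<Suc l]))))"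

end

theory Submission
  imports Defs "HOL-Real_Asymp.Real_Asymp"
begin


fun run :: "('a list \<Rightarrow> 'a list \<Rightarrow> 'a \<Rightarrow> 'a list) \<Rightarrow> 'a list \<Rightarrow> 'a list \<Rightarrow> 'a list \<Rightarrow> 'a list" where
  "run step h xs [] = xs"
| "run step h xs (x#\<sigma>) = run step (h@[x]) (step h xs x) \<sigma>"

lemma alg_cost_append:
  "alg_cost step h xs (a@b) = alg_cost step h xs a + alg_cost step (h@a) (run step h xs a) b"
  by (induction a arbitrary: h xs) auto

lemma run_append: "run step h xs (a@b) = run step (h@a) (run step h xs a) b"
  by (induction a arbitrary: h xs) auto

lemma pos_Cons: "pos (z#q) y = (if z = y then 0 else Suc (pos q y))"
  by (simp add: pos_def)

lemma pos_append: "pos (p@q) y = (if y \<in> set p then pos p y else length p + pos q y)"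
  unfolding pos_def by (induction p) auto

lemma pos_less: "y \<in> set p \<Longrightarrow> pos p y < length p"
  by (induction p) (auto simp: pos_Cons)

lemma pos_nth: "distinct xs \<Longrightarrow> k < length xs \<Longrightarrow> pos xs (xs!k) = k"
proof (induction xs arbitrary: k)
  case Nil then show ?case by simp
next
  case (Cons a xs) then show ?case
    by (cases k) (auto simp: pos_Cons nth_mem)
qed

lemma nth_pos: "y \<in> set xs \<Longrightarrow> xs ! pos xs y = y"
  by (induction xs) (auto simp: pos_Cons)

abbreviation CM :: "'a list \<Rightarrow> 'a list" where
  "CM ys \<equiv> concat (map (\<lambda>i. replicate 3 i) ys)"

lemma pass_gen_aux:
  assumes blk: "\<And>d y t. ys = d @ y # t \<Longrightarrow>
     alg_cost step (h @ CM d) (rev d @ rev t @ [y]) (replicate 3 y) = c \<and>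
     run step (h @ CM d) (rev d @ rev t @ [y]) (replicate 3 y) = y # rev d @ rev t"
  shows "ys = d @ t \<Longrightarrow> alg_cost step (h @ CM d) (rev d @ rev t) (CM t) = length t * c \<and>
     run step (h @ CM d) (rev d @ rev t) (CM t) = rev t @ rev d"
proof (induction t arbitrary: d)
  case Nil then show ?case by simp
next
  case (Cons y t)
  have B: "alg_cost step (h @ CM d) (rev d @ rev t @ [y]) (replicate 3 y) = c \<and>
     run step (h @ CM d) (rev d @ rev t @ [y]) (replicate 3 y) = y # rev d @ rev t"
    using blk Cons.prems by blast
  have IH: "alg_cost step (h @ CM (d@[y])) (rev (d@[y]) @ rev t) (CM t) = length t * c \<and>
     run step (h @ CM (d@[y])) (rev (d@[y]) @ rev t) (CM t) = rev t @ rev (d@[y])"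
    using Cons.IH[of "d@[y]"] Cons.prems by simp
  show ?case using B IH
    by (simp add: alg_cost_append run_append)
qed

lemma pass_gen:
  assumes blk: "\<And>d y t. ys = d @ y # t \<Longrightarrow>
     alg_cost step (h @ CM d) (rev d @ rev t @ [y]) (replicate 3 y) = c \<and>
     run step (h @ CM d) (rev d @ rev t @ [y]) (replicate 3 y) = y # rev d @ rev t"
  shows "alg_cost step h (rev ys) (CM ys) = length ys * c \<and> run step h (rev ys) (CM ys) = rev ys"
  using pass_gen_aux[OF blk, of ys "[]"] by simp

lemma multi:
  assumes "\<And>k. alg_cost step (concat (replicate k P)) xs P = pc k \<and> run step (concat (replicate k P)) xs P = xs"
  shows "alg_cost step (concat (replicate k P)) xs (concat (replicate n P)) = (\<Sum>j<n. pc (k+j))"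
proof (induction n arbitrary: k)
  case 0 then show ?case by simp
next
  case (Suc n)
  have e: "concat (replicate k P) @ P = concat (replicate (Suc k) P)"
    by (simp add: replicate_append_same[symmetric])
  have c: "concat (replicate (Suc n) P) = P @ concat (replicate n P)" by simp
  have "alg_cost step (concat (replicate k P)) xs (concat (replicate (Suc n) P))
     = pc k + (\<Sum>j<n. pc (Suc k + j))"
    unfolding c using assms[of k] Suc.IH[of "Suc k"] by (simp only: alg_cost_append e)
  also have "\<dots> = (\<Sum>j<Suc n. pc (k+j))"
    by (subst sum.lessThan_Suc_shift) simp
  finally show ?case .

qed



lemma three: "replicate 3 y = [y,y,y]" by (simp add: numeral_3_eq_3)

lemma mtf_last: "y \<notin> set us \<Longrightarrow> mtf y (us@[y]) = y # us"
  by (simp add: mtf_def move_to_def remove1_append)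

lemma mtf_hd: "y \<notin> set us \<Longrightarrow> mtf y (y#us) = y # us"
  by (simp add: mtf_def move_to_def)

lemma pos_last: "y \<notin> set us \<Longrightarrow> pos (us@[y]) y = length us"
  by (simp add: pos_append pos_Cons)

lemma blk_MTFO:
  assumes "y \<notin> set us"
  shows "alg_cost MTFO_step h (us@[y]) (replicate 3 y) =
           (if even (count_list h y) then length us + 3 else 2 * length us + 3) \<and>
         run MTFO_step h (us@[y]) (replicate 3 y) = y # us"
  using assms by (simp add: three MTFO_step_def mtf_last mtf_hd pos_last pos_Cons)

lemma blk_MTFE:
  assumes "y \<notin> set us"
  shows "alg_cost MTFE_step h (us@[y]) (replicate 3 y) =
           (if odd (count_list h y) then length us + 3 else 2 * length us + 3) \<and>
         run MTFE_step h (us@[y]) (replicate 3 y) = y # us"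
  using assms by (simp add: three MTFE_step_def mtf_last mtf_hd pos_last pos_Cons)

lemma blk_MTF:
  assumes "y \<notin> set us"
  shows "alg_cost (\<lambda>h xs x. mtf x xs) h (us@[y]) (replicate 3 y) = length us + 3 \<and>
         run (\<lambda>h xs x. mtf x xs) h (us@[y]) (replicate 3 y) = y # us"
  using assms by (simp add: three mtf_last mtf_hd pos_last pos_Cons)

lemma takeWhile_since:
  "y \<notin> set mid \<Longrightarrow> takeWhile (\<lambda>z. z \<noteq> y) (rev (A @ y # mid)) = rev mid"
proof -
  assume a: "y \<notin> set mid"
  have "rev (A @ y # mid) = rev mid @ (y # rev A)" by simp
  also have "takeWhile (\<lambda>z. z \<noteq> y) \<dots> = rev mid @ takeWhile (\<lambda>z. z \<noteq> y) (y # rev A)"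
    by (rule takeWhile_append2) (use a in auto)
  finally show ?thesis by simp
qed

lemma blk_TS:
  assumes "y \<notin> set us"
    and H: "y \<notin> set h \<or> (\<exists>A mid. h = A @ y # mid \<and> y \<notin> set mid \<and> (\<forall>u\<in>set us. 2 \<le> count_list mid u))"
  shows "alg_cost TS_step h (us@[y]) (replicate 3 y) = 2 * length us + 3 \<and>
         run TS_step h (us@[y]) (replicate 3 y) = y # us"
proof -
  have s1: "TS_step h (us@[y]) y = us@[y]"
  proof (cases "y \<in> set h")
    case False then show ?thesis by (simp add: TS_step_def)
  next
    case True
    then obtain A mid where h: "h = A @ y # mid" "y \<notin> set mid" "\<forall>u\<in>set us. 2 \<le> count_list mid u"
      using H by blast
    have f: "filter (\<lambda>u. count_list (rev mid) u \<le> 1) us = []"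
      using h(3) by (auto simp: filter_empty_conv)
    have tw: "takeWhile (\<lambda>z. z \<noteq> y) (rev h) = rev mid" using h takeWhile_since by metis
    show ?thesis using True f assms(1)
      by (simp add: TS_step_def tw pos_last Let_def)
  qed
  have s2: "TS_step (h@[y]) (us@[y]) y = y # us"
  proof (cases us)
    case Nil then show ?thesis by (simp add: TS_step_def Let_def pos_Cons)
  next
    case (Cons u us')
    then show ?thesis using assms(1)
      by (auto simp add: TS_step_def Let_def pos_last pos_Cons move_to_def remove1_append)
  qed
  have s3: "TS_step (h@[y,y]) (y#us) y = y # us"
    by (simp add: TS_step_def Let_def pos_Cons)
  show ?thesis using s1 s2 s3 assms(1)
    by (simp add: three pos_last pos_Cons)
qed



lemma count_CM: "count_list (CM zs) u = 3 * count_list zs u"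
  by (induction zs) (auto simp: three)

lemma count_rep: "count_list (concat (replicate k P)) u = k * count_list P u"
  by (induction k) auto

lemma set_CM: "set (CM zs) = set zs"
  by (induction zs) auto

lemma cnt_pos: "u \<in> set zs \<Longrightarrow> 1 \<le> count_list zs u"
  using count_list_0_iff[of zs u] by simp

lemma blk_setup:
  assumes "distinct ys" "ys = d @ y # t"
  shows "y \<notin> set (rev d @ rev t)" "length (rev d @ rev t) = length ys - 1"
    "count_list ys y = 1"
  using assms by (auto simp: count_list_0_iff)

lemma pass_MTFO:
  assumes "distinct ys"
  shows "alg_cost MTFO_step (concat (replicate k (CM ys))) (rev ys) (CM ys) =
           length ys * (if even k then length ys + 2 else 2 * length ys + 1) \<and>
         run MTFO_step (concat (replicate k (CM ys))) (rev ys) (CM ys) = rev ys"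
proof (rule pass_gen)
    fix d y t assume yt: "ys = d @ y # t"
    note su = blk_setup[OF assms yt]
    have L: "length ys \<ge> 1" using yt by simp
    have cnt: "count_list (concat (replicate k (CM ys)) @ CM d) y = 3 * k"
      using su(3) yt assms by (simp add: count_rep count_CM count_list_0_iff three)
    show "alg_cost MTFO_step (concat (replicate k (CM ys)) @ CM d) (rev d @ rev t @ [y]) (replicate 3 y) =
       (if even k then length ys + 2 else 2 * length ys + 1) \<and>
       run MTFO_step (concat (replicate k (CM ys)) @ CM d) (rev d @ rev t @ [y]) (replicate 3 y) = y # rev d @ rev t"
      using blk_MTFO[OF su(1), of "concat (replicate k (CM ys)) @ CM d", unfolded cnt] su(2) L
      by auto
qed

lemma pass_MTFE:
  assumes "distinct ys"
  shows "alg_cost MTFE_step (concat (replicate k (CM ys))) (rev ys) (CM ys) =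
           length ys * (if odd k then length ys + 2 else 2 * length ys + 1) \<and>
         run MTFE_step (concat (replicate k (CM ys))) (rev ys) (CM ys) = rev ys"
proof (rule pass_gen)
  fix d y t assume yt: "ys = d @ y # t"
  note su = blk_setup[OF assms yt]
  have L: "length ys \<ge> 1" using yt by simp
  have cnt: "count_list (concat (replicate k (CM ys)) @ CM d) y = 3 * k"
    using su(3) yt assms by (simp add: count_rep count_CM count_list_0_iff three)
  show "alg_cost MTFE_step (concat (replicate k (CM ys)) @ CM d) (rev d @ rev t @ [y]) (replicate 3 y) =
     (if odd k then length ys + 2 else 2 * length ys + 1) \<and>
     run MTFE_step (concat (replicate k (CM ys)) @ CM d) (rev d @ rev t @ [y]) (replicate 3 y) = y # rev d @ rev t"
    using blk_MTFE[OF su(1), of "concat (replicate k (CM ys)) @ CM d", unfolded cnt] su(2) L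
    by auto
qed

lemma pass_MTF:
  assumes "distinct ys"
  shows "alg_cost (\<lambda>h xs x. mtf x xs) (concat (replicate k (CM ys))) (rev ys) (CM ys) =
           length ys * (length ys + 2) \<and>
         run (\<lambda>h xs x. mtf x xs) (concat (replicate k (CM ys))) (rev ys) (CM ys) = rev ys"
proof (rule pass_gen)
  fix d y t assume yt: "ys = d @ y # t"
  note su = blk_setup[OF assms yt]
  have L: "length ys \<ge> 1" using yt by simp
  show "alg_cost (\<lambda>h xs x. mtf x xs) (concat (replicate k (CM ys)) @ CM d) (rev d @ rev t @ [y]) (replicate 3 y) =
     length ys + 2 \<and>
     run (\<lambda>h xs x. mtf x xs) (concat (replicate k (CM ys)) @ CM d) (rev d @ rev t @ [y]) (replicate 3 y) = y # rev d @ rev t"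
    using blk_MTF[OF su(1), of "concat (replicate k (CM ys)) @ CM d"] su(2) L
    by auto
qed

lemma pass_TS:
  assumes "distinct ys"
  shows "alg_cost TS_step (concat (replicate k (CM ys))) (rev ys) (CM ys) =
           length ys * (2 * length ys + 1) \<and>
         run TS_step (concat (replicate k (CM ys))) (rev ys) (CM ys) = rev ys"
proof (rule pass_gen)
  fix d y t assume yt: "ys = d @ y # t"
  note su = blk_setup[OF assms yt]
  have L: "length ys \<ge> 1" using yt by simp
  let ?h = "concat (replicate k (CM ys)) @ CM d"
  have H: "y \<notin> set ?h \<or> (\<exists>A mid. ?h = A @ y # mid \<and> y \<notin> set mid \<and>
      (\<forall>u\<in>set (rev d @ rev t). 2 \<le> count_list mid u))"
  proof (cases k)
    case 0 then show ?thesis using assms yt by (simp add: set_CM)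
  next
    case (Suc k')
    have "?h = (concat (replicate k' (CM ys)) @ CM d @ [y,y]) @ y # (CM t @ CM d)"
      using Suc yt by (simp add: replicate_append_same[symmetric] three)
    moreover have "y \<notin> set (CM t @ CM d)" using assms yt by (simp add: set_CM)
    moreover have "\<forall>u\<in>set (rev d @ rev t). 2 \<le> count_list (CM t @ CM d) u"
      using cnt_pos[of _ d] cnt_pos[of _ t] by (fastforce simp: count_CM)
    ultimately show ?thesis by blast
  qed
  show "alg_cost TS_step ?h (rev d @ rev t @ [y]) (replicate 3 y) =
     2 * length ys + 1 \<and>
     run TS_step ?h (rev d @ rev t @ [y]) (replicate 3 y) = y # rev d @ rev t"
    using blk_TS[OF su(1) H] su(2) L by auto
qed

lemma sum_pairs: "(\<Sum>j<2*(s::nat). (f j::nat)) = (\<Sum>i<s. f (2*i) + f (2*i+1))"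
  by (induction s) (auto simp: sum.lessThan_Suc)



lemma mtf_props: "distinct xs \<Longrightarrow> x \<in> set xs \<Longrightarrow> distinct (mtf x xs) \<and> set (mtf x xs) = set xs"
  by (auto simp: mtf_def move_to_def)

lemma mtf_offline:
  "distinct xs \<Longrightarrow> set \<sigma> \<subseteq> set xs \<Longrightarrow> offline_run xs \<sigma> (alg_cost (\<lambda>h xs x. mtf x xs) h xs \<sigma>)"
proof (induction \<sigma> arbitrary: h xs)
  case Nil then show ?case by (simp add: offline_run.finish)
next
  case (Cons x \<sigma>)
  have x: "x \<in> set xs" using Cons.prems by simp
  have IH: "offline_run (mtf x xs) \<sigma> (alg_cost (\<lambda>h xs x. mtf x xs) (h@[x]) (mtf x xs) \<sigma>)"
    using Cons.IH mtf_props[OF Cons.prems(1) x] Cons.prems(2) by simp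
  show ?case using offline_run.serve[OF x _ IH[unfolded mtf_def]] by (simp add: mtf_def)
qed

fun opt2 :: "'a \<Rightarrow> 'a \<Rightarrow> 'a list \<Rightarrow> nat" where
  "opt2 a b [] = 0"
| "opt2 a b (x#\<sigma>) = (if x = a then min (opt2 a b \<sigma>) (Suc (opt2 b a \<sigma>))
     else if x = b then Suc (min (opt2 a b \<sigma>) (opt2 b a \<sigma>)) else opt2 a b \<sigma>)"

lemma opt2_swap: "a \<noteq> b \<Longrightarrow> opt2 a b \<sigma> \<le> Suc (opt2 b a \<sigma>)"
proof (induction \<sigma> arbitrary: a b)
  case Nil then show ?case by simp
next
  case (Cons x \<sigma>)
  have "opt2 a b \<sigma> \<le> Suc (opt2 b a \<sigma>)" "opt2 b a \<sigma> \<le> Suc (opt2 a b \<sigma>)"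
    using Cons.IH Cons.prems by auto
  then show ?case using Cons.prems by (auto simp: min_def)
qed

definition pv :: "'a list \<Rightarrow> 'a list \<Rightarrow> 'a \<times> 'a \<Rightarrow> nat" where
  "pv xs \<sigma> p = (if pos xs (fst p) < pos xs (snd p) then opt2 (fst p) (snd p) \<sigma> else opt2 (snd p) (fst p) \<sigma>)"

definition Off :: "'a set \<Rightarrow> ('a \<times> 'a) set" where
  "Off S = {p. fst p \<in> S \<and> snd p \<in> S \<and> fst p \<noteq> snd p}"

definition DD :: "'a list \<Rightarrow> 'a list \<Rightarrow> nat" where
  "DD xs \<sigma> = (\<Sum>p\<in>Off (set xs). pv xs \<sigma> p)"

lemma finite_Off: "finite S \<Longrightarrow> finite (Off S)"
  by (rule finite_subset[of _ "S \<times> S"]) (auto simp: Off_def)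

lemma pos_inj: "y \<in> set xs \<Longrightarrow> z \<in> set xs \<Longrightarrow> pos xs y = pos xs z \<Longrightarrow> y = z"
  by (metis nth_pos)

lemma pos_swap:
  assumes "distinct xs" "Suc i < length xs" "y \<in> set xs"
  shows "pos (swap_adj i xs) y = (if pos xs y = i then Suc i else if pos xs y = Suc i then i else pos xs y)"
proof -
  let ?m = "pos xs y"
  have m: "?m < length xs" "xs ! ?m = y" using pos_less[OF assms(3)] nth_pos[OF assms(3)] by auto
  have d: "distinct (swap_adj i xs)" using assms unfolding swap_adj_def by (simp add: distinct_swap)
  let ?f = "if ?m = i then Suc i else if ?m = Suc i then i else ?m"
  have e: "swap_adj i xs ! ?f = y" using m assms(2) unfolding swap_adj_def by (auto simp: nth_list_update)
  have l: "?f < length (swap_adj i xs)" using m assms(2) by (simp add: swap_adj_def)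
  show ?thesis using pos_nth[OF d l] unfolding e .
qed

lemma set_swap_adj: "Suc i < length xs \<Longrightarrow> set (swap_adj i xs) = set xs"
  unfolding swap_adj_def by (simp add: set_swap)

lemma distinct_swap_adj: "Suc i < length xs \<Longrightarrow> distinct (swap_adj i xs) = distinct xs"
  unfolding swap_adj_def by (simp add: distinct_swap)

lemma idx_eq: "distinct xs \<Longrightarrow> y \<in> set xs \<Longrightarrow> k < length xs \<Longrightarrow> (y = xs!k) = (pos xs y = k)"
  using pos_nth nth_pos by metis

lemma paid_point:
  assumes "distinct xs" "Suc i < length xs" "p \<in> Off (set xs)"
  shows "pv xs \<sigma> p \<le> (if p \<in> {(xs!i, xs!Suc i), (xs!Suc i, xs!i)} then 1 else 0) + pv (swap_adj i xs) \<sigma> p"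
proof -
  obtain y z where p: "p = (y,z)" by (cases p)
  have yz: "y \<in> set xs" "z \<in> set xs" "y \<noteq> z" using assms(3) p by (auto simp: Off_def)
  have ny: "pos xs y \<noteq> pos xs z" using pos_inj[OF yz(1,2)] yz(3) by auto
  have il: "i < length xs" using assms(2) by simp
  have cond: "(p \<in> {(xs!i, xs!Suc i), (xs!Suc i, xs!i)}) =
     ((pos xs y = i \<and> pos xs z = Suc i) \<or> (pos xs y = Suc i \<and> pos xs z = i))"
    unfolding p using idx_eq[OF assms(1) yz(1) il] idx_eq[OF assms(1) yz(2) il]
      idx_eq[OF assms(1) yz(1) assms(2)] idx_eq[OF assms(1) yz(2) assms(2)] by auto
  show ?thesis
    unfolding cond unfolding pv_def p fst_conv snd_conv pos_swap[OF assms(1,2) yz(1)] pos_swap[OF assms(1,2) yz(2)]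
    using ny opt2_swap[OF yz(3), of \<sigma>] opt2_swap[OF yz(3)[symmetric], of \<sigma>]
    by auto
qed



lemma move_split:
  assumes "distinct xs" "x \<in> set xs" "j \<le> pos xs x"
  obtains A1 A2 bs where "xs = A1 @ A2 @ x # bs" "move_to j x xs = A1 @ x # A2 @ bs" "length A1 = j"
proof -
  obtain as bs where xs: "xs = as @ x # bs" using split_list[OF assms(2)] by blast
  have nx: "x \<notin> set as" using assms(1) xs by simp
  have pa: "pos xs x = length as" using xs nx by (simp add: pos_append pos_Cons)
  have r: "remove1 x xs = as @ bs" using xs nx by (simp add: remove1_append)
  have j: "j \<le> length as" using assms(3) pa by simp
  show ?thesis
    apply (rule that[of "take j as" "drop j as" bs])
    using xs r j by (auto simp: move_to_def)
qed

lemma pos_move: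
  assumes "distinct xs" "x \<in> set xs" "j \<le> pos xs x" "y \<in> set xs"
  shows "pos (move_to j x xs) y = (if y = x then j else if pos xs y < j then pos xs y
           else if pos xs y < pos xs x then Suc (pos xs y) else pos xs y)"
proof -
  obtain A1 A2 bs where s: "xs = A1 @ A2 @ x # bs" "move_to j x xs = A1 @ x # A2 @ bs" "length A1 = j"
    using move_split[OF assms(1-3)] by blast
  have d: "distinct (A1 @ A2 @ x # bs)" using assms(1) s(1) by simp
  have y: "y \<in> set A1 \<or> y \<in> set A2 \<or> y = x \<or> y \<in> set bs" using assms(4) s(1) by auto
  show ?thesis unfolding s(2) unfolding s(1)
    using y d s(3) pos_less[of y A1] pos_less[of y A2]
    by (auto simp: pos_append pos_Cons)
qed

lemma move_props:
  assumes "distinct xs" "x \<in> set xs" "j \<le> pos xs x"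
  shows "distinct (move_to j x xs) \<and> set (move_to j x xs) = set xs"
proof -
  obtain A1 A2 bs where s: "xs = A1 @ A2 @ x # bs" "move_to j x xs = A1 @ x # A2 @ bs" "length A1 = j"
    using move_split[OF assms] by blast
  show ?thesis using assms(1) unfolding s(2) unfolding s(1) by auto
qed

lemma serve_point:
  assumes "distinct xs" "x \<in> set xs" "j \<le> pos xs x" "p \<in> Off (set xs)"
  shows "pv xs (x#\<sigma>) p \<le> (if (snd p = x \<and> pos xs (fst p) < pos xs x) \<or> (fst p = x \<and> pos xs (snd p) < pos xs x) then 1 else 0)
     + pv (move_to j x xs) \<sigma> p"
proof -
  obtain y z where p: "p = (y,z)" by (cases p)
  have yz: "y \<in> set xs" "z \<in> set xs" "y \<noteq> z" using assms(4) p by (auto simp: Off_def)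
  have ny: "pos xs y \<noteq> pos xs z" using pos_inj[OF yz(1,2)] yz(3) by auto
  have nyx: "y = x \<or> pos xs y \<noteq> pos xs x" using pos_inj[OF yz(1) assms(2)] by auto
  have nzx: "z = x \<or> pos xs z \<noteq> pos xs x" using pos_inj[OF yz(2) assms(2)] by auto
  show ?thesis
    unfolding pv_def p fst_conv snd_conv pos_move[OF assms(1-3) yz(1)] pos_move[OF assms(1-3) yz(2)]
    using ny nyx nzx yz(3) assms(3)
    by (auto simp: min_def; linarith)
qed

lemma card2: "card {a,b} \<le> 2" by (cases "a=b") auto

lemma sum_ind: "finite A \<Longrightarrow> (\<Sum>p\<in>A. if P p then 1 else (0::nat)) = card {p\<in>A. P p}"
  by (simp add: sum.If_cases Int_def conj_commute)

lemma card_before: "card {y\<in>set xs. pos xs y < pos xs x} \<le> pos xs x"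
proof -
  have "{y\<in>set xs. pos xs y < pos xs x} \<subseteq> (\<lambda>k. xs!k) ` {..<pos xs x}"
    using nth_pos by force
  then have "card {y\<in>set xs. pos xs y < pos xs x} \<le> card ((\<lambda>k. xs!k) ` {..<pos xs x})"
    by (intro card_mono) auto
  also have "\<dots> \<le> card {..<pos xs x}" by (rule card_image_le) simp
  finally show ?thesis by simp
qed

lemma lb_run: "offline_run xs \<sigma> c \<Longrightarrow> distinct xs \<Longrightarrow> 2 * length \<sigma> + DD xs \<sigma> \<le> 2 * c"
proof (induction rule: offline_run.induct)
  case (finish xs)
  then show ?case by (simp add: DD_def pv_def cong: if_cong)
next
  case (paid i xs \<sigma> c)
  let ?xs' = "swap_adj i xs"
  have d': "distinct ?xs'" and s': "set ?xs' = set xs"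
    using distinct_swap_adj[OF paid.hyps(1)] set_swap_adj[OF paid.hyps(1)] paid.prems by auto
  let ?Q = "{(xs!i, xs!Suc i), (xs!Suc i, xs!i)}"
  have fin: "finite (Off (set xs))" by (simp add: finite_Off)
  have "DD xs \<sigma> \<le> (\<Sum>p\<in>Off (set xs). (if p \<in> ?Q then 1 else 0) + pv ?xs' \<sigma> p)"
    unfolding DD_def by (rule sum_mono) (rule paid_point[OF paid.prems paid.hyps(1)])
  also have "\<dots> = card {p\<in>Off (set xs). p \<in> ?Q} + DD ?xs' \<sigma>"
    unfolding DD_def s' sum.distrib sum_ind[OF fin] ..
  finally have A: "DD xs \<sigma> \<le> card {p\<in>Off (set xs). p \<in> ?Q} + DD ?xs' \<sigma>" .
  have "card {p\<in>Off (set xs). p \<in> ?Q} \<le> 2"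
  proof -
    have "card {p\<in>Off (set xs). p \<in> ?Q} \<le> card ?Q" by (rule card_mono) auto
    also have "card ?Q \<le> 2" by (rule card2)
    finally show ?thesis .
  qed
  then show ?case using A paid.IH[OF d'] by simp
next
  case (serve x xs j \<sigma> c)
  let ?xs' = "move_to j x xs"
  have d': "distinct ?xs'" and s': "set ?xs' = set xs"
    using move_props[OF serve.prems serve.hyps(1,2)] by auto
  let ?P = "\<lambda>p. (snd p = x \<and> pos xs (fst p) < pos xs x) \<or> (fst p = x \<and> pos xs (snd p) < pos xs x)"
  have fin: "finite (Off (set xs))" by (simp add: finite_Off)
  have "DD xs (x#\<sigma>) \<le> (\<Sum>p\<in>Off (set xs). (if ?P p then 1 else 0) + pv ?xs' \<sigma> p)"
    unfolding DD_def by (rule sum_mono) (rule serve_point[OF serve.prems serve.hyps(1,2)])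
  also have "\<dots> = card {p\<in>Off (set xs). ?P p} + DD ?xs' \<sigma>"
    unfolding DD_def s' sum.distrib sum_ind[OF fin] ..
  finally have A: "DD xs (x#\<sigma>) \<le> card {p\<in>Off (set xs). ?P p} + DD ?xs' \<sigma>" .
  have "card {p\<in>Off (set xs). ?P p} \<le> 2 * pos xs x"
  proof -
    let ?B = "{y\<in>set xs. pos xs y < pos xs x}"
    have "{p\<in>Off (set xs). ?P p} \<subseteq> (?B \<times> {x}) \<union> ({x} \<times> ?B)"
      by (auto simp: Off_def)
    then have "card {p\<in>Off (set xs). ?P p} \<le> card ((?B \<times> {x}) \<union> ({x} \<times> ?B))"
      by (rule card_mono[rotated]) simp
    also have "\<dots> \<le> card (?B \<times> {x}) + card ({x} \<times> ?B)" by (rule card_Un_le)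
    also have "\<dots> = 2 * card ?B" by (simp add: card_cartesian_product)
    also have "\<dots> \<le> 2 * pos xs x" using card_before by simp
    finally show ?thesis .
  qed
  then show ?case using A serve.IH[OF d'] by simp
qed



abbreviation YS :: "nat \<Rightarrow> nat list" where "YS l \<equiv> rev [1..<Suc l]"

lemma sg_eq: "sigma_gamma l s = concat (replicate (2*s) (CM (YS l)))"
  by (simp add: sigma_gamma_def)

lemma init_eq: "init_list l = rev (YS l)"
  by (simp add: init_list_def)

lemma MTFO_val: "MTFO (init_list l) (sigma_gamma l s) = s * (3*l*l + 3*l)"
proof -
  let ?P = "CM (YS l)"
  let ?pc = "\<lambda>k. l * (if even k then l + 2 else 2 * l + 1)"
  have "MTFO (init_list l) (sigma_gamma l s) =
      alg_cost MTFO_step (concat (replicate 0 ?P)) (rev (YS l)) (concat (replicate (2*s) ?P))"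
    by (simp add: MTFO_def sg_eq init_eq del: rev_rev_ident)
  also have "\<dots> = (\<Sum>j<2*s. ?pc (0+j))"
    by (rule multi) (use pass_MTFO[of "YS l"] in simp)
  also have "\<dots> = (\<Sum>i<s. ?pc (2*i) + ?pc (2*i+1))" using sum_pairs[where s=s and f="?pc"] by simp
  also have "\<dots> = s * (?pc 0 + ?pc 1)" by simp
  finally show ?thesis by (simp add: algebra_simps)
qed

lemma MTFE_val: "MTFE (init_list l) (sigma_gamma l s) = s * (3*l*l + 3*l)"
proof -
  let ?P = "CM (YS l)"
  let ?pc = "\<lambda>k. l * (if odd k then l + 2 else 2 * l + 1)"
  have "MTFE (init_list l) (sigma_gamma l s) =
      alg_cost MTFE_step (concat (replicate 0 ?P)) (rev (YS l)) (concat (replicate (2*s) ?P))"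
    by (simp add: MTFE_def sg_eq init_eq del: rev_rev_ident)
  also have "\<dots> = (\<Sum>j<2*s. ?pc (0+j))"
    by (rule multi) (use pass_MTFE[of "YS l"] in simp)
  also have "\<dots> = (\<Sum>i<s. ?pc (2*i) + ?pc (2*i+1))" using sum_pairs[where s=s and f="?pc"] by simp
  also have "\<dots> = s * (?pc 0 + ?pc 1)" by simp
  finally show ?thesis by (simp add: algebra_simps)
qed

lemma TS_val: "TS (init_list l) (sigma_gamma l s) = s * (4*l*l + 2*l)"
proof -
  let ?P = "CM (YS l)"
  let ?pc = "\<lambda>k. l * (2 * l + 1)"
  have "TS (init_list l) (sigma_gamma l s) =
      alg_cost TS_step (concat (replicate 0 ?P)) (rev (YS l)) (concat (replicate (2*s) ?P))"
    by (simp add: TS_def sg_eq init_eq del: rev_rev_ident)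
  also have "\<dots> = (\<Sum>j<2*s. ?pc (0+j))"
    by (rule multi) (use pass_TS[of "YS l"] in simp)
  also have "\<dots> = (\<Sum>i<s. ?pc (2*i) + ?pc (2*i+1))" using sum_pairs[where s=s and f="?pc"] by simp
  also have "\<dots> = s * (?pc 0 + ?pc 1)" by simp
  finally show ?thesis by (simp add: algebra_simps)
qed

lemma MTF_val: "alg_cost (\<lambda>h xs x. mtf x xs) [] (init_list l) (sigma_gamma l s) = s * (2*l*l + 4*l)"
proof -
  let ?P = "CM (YS l)"
  let ?pc = "\<lambda>k. l * (l + 2)"
  have "alg_cost (\<lambda>h xs x. mtf x xs) [] (init_list l) (sigma_gamma l s) =
      alg_cost (\<lambda>h xs x. mtf x xs) (concat (replicate 0 ?P)) (rev (YS l)) (concat (replicate (2*s) ?P))"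
    by (simp add: sg_eq init_eq del: rev_rev_ident)
  also have "\<dots> = (\<Sum>j<2*s. ?pc (0+j))"
    by (rule multi) (use pass_MTF[of "YS l"] in simp)
  also have "\<dots> = (\<Sum>i<s. ?pc (2*i) + ?pc (2*i+1))" using sum_pairs[where s=s and f="?pc"] by simp
  also have "\<dots> = s * (?pc 0 + ?pc 1)" by simp
  finally show ?thesis by (simp add: algebra_simps)
qed



lemma opt2_filter:
  "opt2 a b \<sigma> = opt2 a b (filter (\<lambda>z. z = a \<or> z = b) \<sigma>) \<and>
   opt2 b a \<sigma> = opt2 b a (filter (\<lambda>z. z = a \<or> z = b) \<sigma>)"
  by (induction \<sigma>) auto

lemma filter_rep: "filter P (concat (replicate n W)) = concat (replicate n (filter P W))"
  by (induction n) auto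

lemma filter_CM: "filter P (CM zs) = CM (filter P zs)"
  by (induction zs) (auto simp: three)

lemma filter_upt:
  "(a::nat) < b \<Longrightarrow> filter (\<lambda>z. z = a \<or> z = b) [m..<n] =
     (if m \<le> a \<and> a < n then [a] else []) @ (if m \<le> b \<and> b < n then [b] else [])"
  by (induction n) auto

lemma step_a: "a \<noteq> b \<Longrightarrow> opt2 a b r = A \<Longrightarrow> opt2 b a r = B \<Longrightarrow>
   opt2 a b (a#r) = min A (Suc B) \<and> opt2 b a (a#r) = Suc (min B A)"
  by simp

lemma step_b: "a \<noteq> b \<Longrightarrow> opt2 a b r = A \<Longrightarrow> opt2 b a r = B \<Longrightarrow>
   opt2 a b (b#r) = Suc (min A B) \<and> opt2 b a (b#r) = min B (Suc A)"
  by simp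

lemma six:
  assumes ab: "a \<noteq> b" and h: "opt2 a b r = A" "opt2 b a r = B"
    and c: "(A = 0 \<and> B = 0 \<and> A' = 2 \<and> B' = 1) \<or> (\<exists>k. A = k+2 \<and> B = k+1 \<and> A' = k+4 \<and> B' = k+3)"
  shows "opt2 a b (b#b#b#a#a#a#r) = A' \<and> opt2 b a (b#b#b#a#a#a#r) = B'"
  using c
proof
  assume z: "A = 0 \<and> B = 0 \<and> A' = 2 \<and> B' = 1"
  have h1: "opt2 a b (a#r) = 0" "opt2 b a (a#r) = 1" using step_a[OF ab h] z by auto
  have h2: "opt2 a b (a#a#r) = 0" "opt2 b a (a#a#r) = 1" using step_a[OF ab h1] by auto
  have h3: "opt2 a b (a#a#a#r) = 0" "opt2 b a (a#a#a#r) = 1" using step_a[OF ab h2] by auto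
  have h4: "opt2 a b (b#a#a#a#r) = 1" "opt2 b a (b#a#a#a#r) = 1" using step_b[OF ab h3] by auto
  have h5: "opt2 a b (b#b#a#a#a#r) = 2" "opt2 b a (b#b#a#a#a#r) = 1" using step_b[OF ab h4] by auto
  show ?thesis using step_b[OF ab h5] z by auto
next
  assume "\<exists>k. A = k+2 \<and> B = k+1 \<and> A' = k+4 \<and> B' = k+3"
  then obtain k where z: "A = k+2" "B = k+1" "A' = k+4" "B' = k+3" by blast
  have h1: "opt2 a b (a#r) = k+2" "opt2 b a (a#r) = k+2" using step_a[OF ab h] z by auto
  have h2: "opt2 a b (a#a#r) = k+2" "opt2 b a (a#a#r) = k+3" using step_a[OF ab h1] by auto
  have h3: "opt2 a b (a#a#a#r) = k+2" "opt2 b a (a#a#a#r) = k+3" using step_a[OF ab h2] by auto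
  have h4: "opt2 a b (b#a#a#a#r) = k+3" "opt2 b a (b#a#a#a#r) = k+3" using step_b[OF ab h3] by auto
  have h5: "opt2 a b (b#b#a#a#a#r) = k+4" "opt2 b a (b#b#a#a#a#r) = k+3" using step_b[OF ab h4] by auto
  show ?thesis using step_b[OF ab h5] z by auto
qed

lemma opt2_blocks:
  assumes ab: "a \<noteq> b"
  shows "opt2 a b (concat (replicate n (CM [b,a]))) = 2*n \<and>
         opt2 b a (concat (replicate n (CM [b,a]))) = 2*n - 1"
proof (induction n)
  case 0 then show ?case by simp
next
  case (Suc n)
  let ?r = "concat (replicate n (CM [b,a]))"
  have e: "concat (replicate (Suc n) (CM [b,a])) = b#b#b#a#a#a#?r" by (simp add: three)
  have c: "(2*n = 0 \<and> 2*n-1 = 0 \<and> 2*Suc n = 2 \<and> 2*Suc n - 1 = 1) \<or>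
     (\<exists>k. 2*n = k+2 \<and> 2*n-1 = k+1 \<and> 2*Suc n = k+4 \<and> 2*Suc n - 1 = k+3)"
    by (cases n) auto
  show ?case unfolding e using six[OF ab Suc[THEN conjunct1] Suc[THEN conjunct2] c] .
qed

lemma opt2_sg:
  assumes "1 \<le> a" "a < b" "b \<le> l"
  shows "opt2 a b (sigma_gamma l s) = 4 * s"
proof -
  have f: "filter (\<lambda>z. z = a \<or> z = b) (sigma_gamma l s) = concat (replicate (2*s) (CM [b,a]))"
    using assms unfolding sg_eq filter_rep filter_CM rev_filter[symmetric] filter_upt[OF assms(2)]
    by simp
  show ?thesis using opt2_filter[of a b "sigma_gamma l s"] opt2_blocks[of a b "2*s"] assms
    unfolding f by simp
qed

lemma pos_init: "1 \<le> y \<Longrightarrow> y \<le> l \<Longrightarrow> pos (init_list l) y = y - 1"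
proof -
  assume y: "1 \<le> y" "y \<le> l"
  have n: "[1..<Suc l] ! (y-1) = 1 + (y-1)" by (rule nth_upt) (use y in simp)
  have e: "init_list l ! (y-1) = y" using n y by (simp add: init_list_def)
  have le: "y - 1 < length (init_list l)" using y by (simp add: init_list_def)
  have d: "distinct (init_list l)" by (simp add: init_list_def)
  show ?thesis using pos_nth[OF d le] unfolding e .
qed

lemma card_Off: "finite S \<Longrightarrow> card (Off S) = card S * card S - card S"
proof -
  assume fS: "finite S"
  have "Off S = S \<times> S - (\<lambda>y. (y,y)) ` S" by (auto simp: Off_def)
  moreover have "card ((\<lambda>y. (y,y)) ` S) = card S" by (rule card_image) (auto simp: inj_on_def)
  moreover have "(\<lambda>y. (y,y)) ` S \<subseteq> S \<times> S" by auto
  ultimately show ?thesis using fS by (simp add: card_Diff_subset card_cartesian_product)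
qed

lemma DD_init: "DD (init_list l) (sigma_gamma l s) = 4 * s * (l * l - l)"
proof -
  have S: "set (init_list l) = {1..l}" by (auto simp: init_list_def)
  have "DD (init_list l) (sigma_gamma l s) = (\<Sum>p\<in>Off {1..l}. 4 * s)"
    unfolding DD_def S
  proof (rule sum.cong[OF refl])
    fix p assume p: "p \<in> Off {1..l}"
    obtain y z where yz: "p = (y,z)" by (cases p)
    have r: "1 \<le> y" "y \<le> l" "1 \<le> z" "z \<le> l" "y \<noteq> z" using p yz by (auto simp: Off_def)
    show "pv (init_list l) (sigma_gamma l s) p = 4 * s"
      unfolding yz pv_def fst_conv snd_conv pos_init[OF r(1,2)] pos_init[OF r(3,4)]
      using r opt2_sg[of y z l s] opt2_sg[of z y l s] by auto
  qed
  also have "\<dots> = 4 * s * (l * l - l)" by (simp add: card_Off)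
  finally show ?thesis .
qed

lemma len_sg: "length (sigma_gamma l s) = 6 * s * l"
proof -
  have "length (CM zs) = 3 * length zs" for zs :: "nat list" by (induction zs) auto
  then show ?thesis unfolding sg_eq by (simp add: length_concat sum_list_replicate)
qed

lemma OPT_val: "OPT (init_list l) (sigma_gamma l s) = s * (2*l*l + 4*l)"
  unfolding OPT_def
proof (rule Least_equality)
  have d: "distinct (init_list l)" by (simp add: init_list_def)
  have "set (sigma_gamma l s) \<subseteq> set (init_list l)"
    by (auto simp: sg_eq init_list_def set_CM)
  from mtf_offline[OF d this, of "[]"] show "offline_run (init_list l) (sigma_gamma l s) (s * (2*l*l + 4*l))"
    unfolding MTF_val .
next
  fix c assume r: "offline_run (init_list l) (sigma_gamma l s) c"
  have d: "distinct (init_list l)" by (simp add: init_list_def)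
  have "2 * (6 * s * l) + 4 * s * (l * l - l) \<le> 2 * c"
    using lb_run[OF r d] unfolding len_sg DD_init .
  moreover have "l \<le> l * l" by simp
  ultimately show "s * (2*l*l + 4*l) \<le> c"
    by (simp add: algebra_simps diff_mult_distrib2) 
qed


theorem lemma9:
  shows "\<exists>gO gE gT gOPT :: nat \<Rightarrow> real.
     gO \<in> o[at_top](\<lambda>l. real l ^ 2) \<and> gE \<in> o[at_top](\<lambda>l. real l ^ 2) \<and>
     gT \<in> o[at_top](\<lambda>l. real l ^ 2) \<and> gOPT \<in> o[at_top](\<lambda>l. real l ^ 2) \<and>
     (\<forall>l s. s \<ge> 1 \<longrightarrow>
        real (MTFO (init_list l) (sigma_gamma l s)) = real s * (3 * real l ^ 2 + gO l) \<and>
        real (MTFE (init_list l) (sigma_gamma l s)) = real s * (3 * real l ^ 2 + gE l) \<and>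
        real (TS (init_list l) (sigma_gamma l s)) = real s * (4 * real l ^ 2 + gT l) \<and>
        real (OPT (init_list l) (sigma_gamma l s)) = real s * (2 * real l ^ 2 + gOPT l))"
proof (intro exI conjI allI impI)
  show "(\<lambda>l. 3 * real l) \<in> o[at_top](\<lambda>l. real l ^ 2)" by real_asymp
  show "(\<lambda>l. 3 * real l) \<in> o[at_top](\<lambda>l. real l ^ 2)" by real_asymp
  show "(\<lambda>l. 2 * real l) \<in> o[at_top](\<lambda>l. real l ^ 2)" by real_asymp
  show "(\<lambda>l. 4 * real l) \<in> o[at_top](\<lambda>l. real l ^ 2)" by real_asymp
  fix l s :: nat
  show "real (MTFO (init_list l) (sigma_gamma l s)) = real s * (3 * real l ^ 2 + 3 * real l)"
    unfolding MTFO_val by (simp add: power2_eq_square algebra_simps)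
  show "real (MTFE (init_list l) (sigma_gamma l s)) = real s * (3 * real l ^ 2 + 3 * real l)"
    unfolding MTFE_val by (simp add: power2_eq_square algebra_simps)
  show "real (TS (init_list l) (sigma_gamma l s)) = real s * (4 * real l ^ 2 + 2 * real l)"
    unfolding TS_val by (simp add: power2_eq_square algebra_simps)
  show "real (OPT (init_list l) (sigma_gamma l s)) = real s * (2 * real l ^ 2 + 4 * real l)"
    unfolding OPT_val by (simp add: power2_eq_square algebra_simps)
qed

end
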